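(* Let $\Omega=\Omega_0\setminus\overline\Omega_1$ be a convex ring with $\infty$-harmonic potential $u$. For $x\in\Omega$ let $\Omega_{u(x)}=\{y\in\Omega_0:u(y)>u(x)\}$ and let $N_x$ be the set of unit vectors $\nu\in\mathbb R^n$ with $\nu\cdot(y-x)\le0$ for all $y\in\Omega_{u(x)}$. For a unit vector $\nu$ let $r_{x,\nu}\in(0,\infty)$ be the unique number with $x+r_{x,\nu}\nu\in\partial\Omega_0$. Then for every $x\in\Omega$: $$-Du(x)\cdot\nu\ \ge\ \frac{u(x)-u(x+r\nu)}{r}>0\qquad\forall\nu\in N_x,\ \forall r\in(0,r_{x,\nu}];$$ moreover $N_x=\{\nu_x\}$ with $\nu_x:=-Du(x)/|Du(x)|$; consequently $|Du(x)|\ge \frac{u(x)-u(x+r\nu_x)}{r}$ for all $r\in(0,r_{x,\nu_x}]$, and in particular $|Du(x)|\ge u(x)/r_{x,\nu_x}$.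
   Context: Let $n\ge 2$. A convex ring is a set $\Omega=\Omega_0\setminus\overline{\Omega}_1$, where $\Omega_0\subset\mathbb R^n$ is a bounded convex domain and $\overline\Omega_1\subset\Omega_0$ is a nonempty compact convex set (possibly with empty interior); $\partial\Omega_1$ denotes the boundary of $\overline\Omega_1$. The $\infty$-harmonic potential $u\in C^0(\overline\Omega)$ is the unique viscosity solution of $\langle D^2u\,Du,Du\rangle=0$ in $\Omega$ with $u=0$ on $\partial\Omega_0$, $u=1$ on $\partial\Omega_1$, extended by $1$ on $\overline\Omega_1$ and by $0$ outside $\Omega_0$. It is known that $u$ is differentiable at every point of $\Omega$ and that the super level sets $\{y\in\Omega_0:u(y)>t\}$ are convex. *)

theory Defs
  imports "HOL-Analysis.Analysis"
begin

definition grad :: "('a::euclidean_space \<Rightarrow> real) \<Rightarrow> 'a \<Rightarrow> 'a" where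
  "grad u x = (THE D. (u has_derivative (\<lambda>h. D \<bullet> h)) (at x))"

definition C2_test :: "('a::euclidean_space \<Rightarrow> real) \<Rightarrow> 'a \<Rightarrow> ('a \<Rightarrow> 'a) \<Rightarrow> ('a \<Rightarrow> 'a \<Rightarrow> 'a) \<Rightarrow> bool" where
  "C2_test phi x0 g H \<longleftrightarrow> (\<exists>e>0.
     (\<forall>y\<in>ball x0 e. (phi has_derivative (\<lambda>h. g y \<bullet> h)) (at y) \<and> (g has_derivative H y) (at y))
     \<and> (\<forall>v. continuous_on (ball x0 e) (\<lambda>y. H y v)))"

text \<open>Viscosity solution of the infinity Laplace equation  <D^2 u Du, Du> = 0  in U,
  with C2 test functions.\<close>
definition inf_harmonic_visc :: "('a::euclidean_space \<Rightarrow> real) \<Rightarrow> 'a set \<Rightarrow> bool" where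
  "inf_harmonic_visc u U \<longleftrightarrow> continuous_on U u \<and>
     (\<forall>x0\<in>U. \<forall>phi g H. C2_test phi x0 g H \<longrightarrow>
        (\<exists>e>0. \<forall>y\<in>ball x0 e \<inter> U. u y - phi y \<le> u x0 - phi x0) \<longrightarrow>
        H x0 (g x0) \<bullet> g x0 \<ge> 0) \<and>
     (\<forall>x0\<in>U. \<forall>phi g H. C2_test phi x0 g H \<longrightarrow>
        (\<exists>e>0. \<forall>y\<in>ball x0 e \<inter> U. u y - phi y \<ge> u x0 - phi x0) \<longrightarrow>
        H x0 (g x0) \<bullet> g x0 \<le> 0)"

definition exit_radius :: "'a::euclidean_space set \<Rightarrow> 'a \<Rightarrow> 'a \<Rightarrow> real" where
  "exit_radius \<Omega>0 x \<nu> = (THE r. 0 < r \<and> x + r *\<^sub>R \<nu> \<in> frontier \<Omega>0)"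

definition normal_set :: "('a::euclidean_space \<Rightarrow> real) \<Rightarrow> 'a set \<Rightarrow> 'a \<Rightarrow> 'a set" where
  "normal_set u \<Omega>0 x = {\<nu>. norm \<nu> = 1 \<and> (\<forall>y\<in>{y\<in>\<Omega>0. u y > u x}. \<nu> \<bullet> (y - x) \<le> 0)}"

end

theory Submission
  imports Defs
begin
lemma linear_inner_rep:
  fixes f :: "'a::euclidean_space \<Rightarrow> real"
  assumes "linear f"
  shows "f h = (\<Sum>b\<in>Basis. f b *\<^sub>R b) \<bullet> h"
proof -
  have "f h = f (\<Sum>b\<in>Basis. (h \<bullet> b) *\<^sub>R b)" by (simp add: euclidean_representation)
  also have "\<dots> = (\<Sum>b\<in>Basis. (h \<bullet> b) * f b)"
    using assms by (simp add: linear_sum linear_scale)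
  also have "\<dots> = (\<Sum>b\<in>Basis. f b *\<^sub>R b) \<bullet> h"
    by (subst inner_commute) (simp add: inner_sum_left mult.commute)
  finally show ?thesis .
qed

lemma norm_diff_deriv:
  fixes z y :: "'a::euclidean_space"
  assumes "y \<noteq> z"
  shows "((\<lambda>y. norm (y - z)) has_derivative (\<lambda>h. sgn (y - z) \<bullet> h)) (at y)"
proof -
  have "((\<lambda>y. y - z) has_derivative (\<lambda>h. h)) (at y)"
    by (rule derivative_eq_intros | simp)+
  moreover have "(norm has_derivative (\<lambda>h. sgn (y - z) \<bullet> h)) (at (y - z))"
  proof -
    have "(\<lambda>h. h \<bullet> sgn (y - z)) = (\<lambda>h. sgn (y - z) \<bullet> h)" by (simp add: fun_eq_iff inner_commute)
    then show ?thesis using has_derivative_norm[of "y - z"] assms by simp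
  qed
  ultimately show ?thesis using has_derivative_compose by fastforce
qed

definition conef :: "real \<Rightarrow> real \<Rightarrow> real \<Rightarrow> 'a::euclidean_space \<Rightarrow> 'a \<Rightarrow> real" where
  "conef a b \<epsilon> z y = a + b * norm (y - z) - \<epsilon> * ((y - z) \<bullet> (y - z))"
definition coneg :: "real \<Rightarrow> real \<Rightarrow> 'a::euclidean_space \<Rightarrow> 'a \<Rightarrow> 'a" where
  "coneg b \<epsilon> z y = (b / norm (y - z) - 2 * \<epsilon>) *\<^sub>R (y - z)"
definition coneH :: "real \<Rightarrow> real \<Rightarrow> 'a::euclidean_space \<Rightarrow> 'a \<Rightarrow> 'a \<Rightarrow> 'a" where
  "coneH b \<epsilon> z y v = (b / norm (y - z) - 2 * \<epsilon>) *\<^sub>R v - (b / norm (y - z) ^ 3 * ((y - z) \<bullet> v)) *\<^sub>R (y - z)"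

lemma conef_deriv:
  fixes z y :: "'a::euclidean_space"
  assumes "y \<noteq> z"
  shows "(conef a b \<epsilon> z has_derivative (\<lambda>h. coneg b \<epsilon> z y \<bullet> h)) (at y)"
proof -
  note dn = norm_diff_deriv[OF assms]
  show ?thesis unfolding conef_def
    apply (rule has_derivative_eq_rhs)
     apply (rule derivative_eq_intros dn | simp)+
    apply (auto simp: fun_eq_iff coneg_def sgn_div_norm inner_commute algebra_simps divide_inverse)
    done
qed

lemma coneg_deriv:
  fixes z y :: "'a::euclidean_space"
  assumes "y \<noteq> z"
  shows "(coneg b \<epsilon> z has_derivative coneH b \<epsilon> z y) (at y)"
proof -
  note dn = norm_diff_deriv[OF assms]
  have nz: "norm (y - z) \<noteq> 0" using assms by simp
  have "((\<lambda>y. (b * inverse (norm (y - z)) - 2 * \<epsilon>) *\<^sub>R (y - z)) has_derivative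
     (\<lambda>h. (b * (- (inverse (norm (y - z)) * (sgn (y - z) \<bullet> h) * inverse (norm (y - z))))) *\<^sub>R (y - z)
        + (b * inverse (norm (y - z)) - 2 * \<epsilon>) *\<^sub>R h)) (at y)"
    by (rule derivative_eq_intros dn nz | simp)+
  moreover have "(\<lambda>h. (b * (- (inverse (norm (y - z)) * (sgn (y - z) \<bullet> h) * inverse (norm (y - z))))) *\<^sub>R (y - z)
        + (b * inverse (norm (y - z)) - 2 * \<epsilon>) *\<^sub>R h) = coneH b \<epsilon> z y"
    using nz by (auto simp: coneH_def sgn_div_norm inner_commute algebra_simps divide_inverse power3_eq_cube)
  ultimately show ?thesis unfolding coneg_def by (simp add: divide_inverse)
qed

lemma cone_C2:
  fixes z x0 :: "'a::euclidean_space"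
  assumes "x0 \<noteq> z"
  shows "C2_test (conef a b \<epsilon> z) x0 (coneg b \<epsilon> z) (coneH b \<epsilon> z)"
  unfolding C2_test_def
proof (intro exI[of _ "norm (x0 - z)"] conjI ballI allI)
  show "0 < norm (x0 - z)" using assms by simp
  fix y assume y: "y \<in> ball x0 (norm (x0 - z))"
  then have "y \<noteq> z" by (auto simp: dist_norm norm_minus_commute)
  then show "(conef a b \<epsilon> z has_derivative (\<lambda>h. coneg b \<epsilon> z y \<bullet> h)) (at y)"
    "(coneg b \<epsilon> z has_derivative coneH b \<epsilon> z y) (at y)"
    using conef_deriv coneg_deriv by blast+
next
  fix v
  have "\<forall>y\<in>ball x0 (norm (x0 - z)). norm (y - z) \<noteq> 0"
    by (auto simp: dist_norm norm_minus_commute)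
  then show "continuous_on (ball x0 (norm (x0 - z))) (\<lambda>y. coneH b \<epsilon> z y v)"
    unfolding coneH_def by (intro continuous_intros) auto
qed

lemma cone_val:
  fixes z x0 :: "'a::euclidean_space"
  assumes "x0 \<noteq> z"
  shows "coneH b \<epsilon> z x0 (coneg b \<epsilon> z x0) \<bullet> coneg b \<epsilon> z x0
     = - 2 * \<epsilon> * (b / norm (x0 - z) - 2 * \<epsilon>)^2 * norm (x0 - z) ^ 2"
proof -
  define w where "w = x0 - z"
  define c where "c = b / norm w - 2 * \<epsilon>"
  have nz: "norm w \<noteq> 0" using assms by (simp add: w_def)
  have ww: "w \<bullet> w = norm w ^ 2" by (simp add: power2_norm_eq_inner)
  have "coneH b \<epsilon> z x0 (coneg b \<epsilon> z x0) \<bullet> coneg b \<epsilon> z x0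
      = c * c * c * (w \<bullet> w) - b / norm w ^ 3 * (c * (w \<bullet> w)) * c * (w \<bullet> w)"
    unfolding coneH_def coneg_def w_def[symmetric] c_def[symmetric]
    by (simp add: inner_diff_left algebra_simps)
  also have "\<dots> = c^2 * norm w ^ 2 * (c - b / norm w)"
    using nz by (simp add: ww power2_eq_square power3_eq_cube field_simps)
  also have "\<dots> = - 2 * \<epsilon> * c^2 * norm w ^ 2" by (simp add: c_def algebra_simps)
  finally show ?thesis by (simp add: c_def w_def)
qed

lemma conef_cont: "continuous_on S (conef a b \<epsilon> z)"
  unfolding conef_def by (intro continuous_intros)

lemma bound_dist:
  fixes V :: "'a::euclidean_space set"
  assumes "bounded V"
  obtains M where "M > 0" "\<forall>y\<in>closure V. norm (y - z) \<le> M"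
proof -
  obtain B where B: "B > 0" "\<forall>y\<in>closure V. norm y \<le> B"
    using assms bounded_closure bounded_pos by blast
  show ?thesis
  proof (rule that[of "B + norm z"])
    show "B + norm z > 0" using B(1) by (simp add: add_pos_nonneg)
    show "\<forall>y\<in>closure V. norm (y - z) \<le> B + norm z"
    proof
      fix y assume "y \<in> closure V"
      then have "norm y \<le> B" using B by blast
      then show "norm (y - z) \<le> B + norm z" using norm_triangle_ineq4[of y z] by linarith
    qed
  qed
qed

lemma cone_above:
  fixes u :: "'a::euclidean_space \<Rightarrow> real"
  assumes sub: "\<forall>x0\<in>U. \<forall>phi g H. C2_test phi x0 g H \<longrightarrow>
        (\<exists>e>0. \<forall>y\<in>ball x0 e \<inter> U. u y - phi y \<le> u x0 - phi x0) \<longrightarrow>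
        H x0 (g x0) \<bullet> g x0 \<ge> 0"
    and VU: "V \<subseteq> U" and oV: "open V" and bV: "bounded V" and z: "z \<notin> V" and b: "b > 0"
    and cont: "continuous_on (closure V) u"
    and bd: "\<forall>y\<in>frontier V. u y \<le> a + b * norm (y - z)"
    and y0: "y0 \<in> V"
  shows "u y0 \<le> a + b * norm (y0 - z)"
proof (rule ccontr)
  assume neg: "\<not> u y0 \<le> a + b * norm (y0 - z)"
  define \<delta> where "\<delta> = u y0 - a - b * norm (y0 - z)"
  have dpos: "\<delta> > 0" using neg by (simp add: \<delta>_def)
  obtain M where M: "M > 0" "\<forall>y\<in>closure V. norm (y - z) \<le> M" using bound_dist[OF bV] by blast
  define \<epsilon> where "\<epsilon> = min (b / (4 * M)) (\<delta> / (2 * M^2))"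
  have epos: "\<epsilon> > 0" using M b dpos by (simp add: \<epsilon>_def)
  have e1: "\<epsilon> \<le> b / (4 * M)" and e2: "\<epsilon> \<le> \<delta> / (2 * M^2)" by (simp_all add: \<epsilon>_def)
  define f where "f y = u y - conef a b \<epsilon> z y" for y
  have fc: "continuous_on (closure V) f" unfolding f_def
    by (intro continuous_intros cont conef_cont)
  obtain x0 where x0: "x0 \<in> closure V" "\<forall>y\<in>closure V. f y \<le> f x0"
  proof -
    have "closure V \<noteq> {}" using y0 closure_subset by blast
    from continuous_attains_sup[OF compact_closure[THEN iffD2, OF bV] this fc] show ?thesis using that by blast
  qed
  have "f y0 \<ge> \<delta>" unfolding f_def conef_def \<delta>_def using epos
    by (simp add: mult_nonneg_nonneg)
  moreover have "f y0 \<le> f x0" using x0(2) y0 closure_subset by blast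
  ultimately have fx0: "f x0 \<ge> \<delta>" by linarith
  have "x0 \<notin> frontier V"
  proof
    assume xf: "x0 \<in> frontier V"
    have "norm (x0 - z) \<le> M" using M x0 by blast
    then have "norm (x0 - z)^2 \<le> M^2" by (simp add: power_mono)
    then have "\<epsilon> * norm (x0 - z)^2 \<le> \<epsilon> * M^2" using epos by (simp add: mult_left_mono)
    also have "\<dots> \<le> \<delta> / (2 * M^2) * M^2" using mult_right_mono[OF e2 zero_le_power2[of M]] by simp
    also have "\<dots> = \<delta> / 2" using M by simp
    finally have "\<epsilon> * norm (x0 - z)^2 \<le> \<delta>/2" .
    moreover have "f x0 \<le> \<epsilon> * ((x0 - z) \<bullet> (x0 - z))"
    proof -
      have "u x0 \<le> a + b * norm (x0 - z)" using bd xf by blast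
      then show ?thesis unfolding f_def conef_def by linarith
    qed
    ultimately show False using fx0 dpos by (simp add: power2_norm_eq_inner)
  qed
  then have x0V: "x0 \<in> V" using x0 oV by (simp add: frontier_def interior_open)
  then have x0z: "x0 \<noteq> z" using z by blast
  obtain e where e: "e > 0" "ball x0 e \<subseteq> V" using oV x0V open_contains_ball by blast
  have lm: "\<forall>y\<in>ball x0 e \<inter> U. u y - conef a b \<epsilon> z y \<le> u x0 - conef a b \<epsilon> z x0"
  proof
    fix y assume "y \<in> ball x0 e \<inter> U"
    then have "f y \<le> f x0" using e x0 closure_subset by blast
    then show "u y - conef a b \<epsilon> z y \<le> u x0 - conef a b \<epsilon> z x0" unfolding f_def by simp
  qed
  have x0U: "x0 \<in> U" using VU x0V by blast
  have "coneH b \<epsilon> z x0 (coneg b \<epsilon> z x0) \<bullet> coneg b \<epsilon> z x0 \<ge> 0"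
    apply (rule sub[rule_format, OF x0U cone_C2[OF x0z]])
    using e(1) lm by blast
  then have ge: "- 2 * \<epsilon> * (b / norm (x0 - z) - 2 * \<epsilon>)^2 * norm (x0 - z) ^ 2 \<ge> 0"
    using cone_val[OF x0z] by simp
  have nM: "norm (x0 - z) \<le> M" "norm (x0 - z) > 0" using M x0 x0z by auto
  have "b / norm (x0 - z) \<ge> b / M" using nM b by (simp add: frac_le)
  moreover have "2 * \<epsilon> \<le> b / (2 * M)" using e1 by simp
  moreover have "b / (2*M) < b / M" using b M by (simp add: divide_strict_left_mono)
  ultimately have "b / norm (x0 - z) - 2 * \<epsilon> > 0" by linarith
  then have "- 2 * \<epsilon> * (b / norm (x0 - z) - 2 * \<epsilon>)^2 * norm (x0 - z) ^ 2 < 0"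
    using epos nM by (simp add: mult_pos_pos)
  then show False using ge by linarith
qed

lemma cone_below:
  fixes u :: "'a::euclidean_space \<Rightarrow> real"
  assumes sup: "\<forall>x0\<in>U. \<forall>phi g H. C2_test phi x0 g H \<longrightarrow>
        (\<exists>e>0. \<forall>y\<in>ball x0 e \<inter> U. u y - phi y \<ge> u x0 - phi x0) \<longrightarrow>
        H x0 (g x0) \<bullet> g x0 \<le> 0"
    and VU: "V \<subseteq> U" and oV: "open V" and bV: "bounded V" and z: "z \<notin> V" and b: "b > 0"
    and cont: "continuous_on (closure V) u"
    and bd: "\<forall>y\<in>frontier V. u y \<ge> a - b * norm (y - z)"
    and y0: "y0 \<in> V"
  shows "u y0 \<ge> a - b * norm (y0 - z)"
proof (rule ccontr)
  assume neg: "\<not> u y0 \<ge> a - b * norm (y0 - z)"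
  define \<delta> where "\<delta> = a - b * norm (y0 - z) - u y0"
  have dpos: "\<delta> > 0" using neg by (simp add: \<delta>_def)
  obtain M where M: "M > 0" "\<forall>y\<in>closure V. norm (y - z) \<le> M" using bound_dist[OF bV] by blast
  define \<epsilon> where "\<epsilon> = min (b / (4 * M)) (\<delta> / (2 * M^2))"
  have epos: "\<epsilon> > 0" using M b dpos by (simp add: \<epsilon>_def)
  have e1: "\<epsilon> \<le> b / (4 * M)" and e2: "\<epsilon> \<le> \<delta> / (2 * M^2)" by (simp_all add: \<epsilon>_def)
  define f where "f y = conef a (-b) (-\<epsilon>) z y - u y" for y
  have fc: "continuous_on (closure V) f" unfolding f_def
    by (intro continuous_intros cont conef_cont)
  obtain x0 where x0: "x0 \<in> closure V" "\<forall>y\<in>closure V. f y \<le> f x0"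
  proof -
    have "closure V \<noteq> {}" using y0 closure_subset by blast
    from continuous_attains_sup[OF compact_closure[THEN iffD2, OF bV] this fc] show ?thesis using that by blast
  qed
  have "f y0 \<ge> \<delta>" unfolding f_def conef_def \<delta>_def using epos
    by (simp add: mult_nonneg_nonneg)
  moreover have "f y0 \<le> f x0" using x0(2) y0 closure_subset by blast
  ultimately have fx0: "f x0 \<ge> \<delta>" by linarith
  have "x0 \<notin> frontier V"
  proof
    assume xf: "x0 \<in> frontier V"
    have "norm (x0 - z) \<le> M" using M x0 by blast
    then have "norm (x0 - z)^2 \<le> M^2" by (simp add: power_mono)
    then have "\<epsilon> * norm (x0 - z)^2 \<le> \<epsilon> * M^2" using epos by (simp add: mult_left_mono)
    also have "\<dots> \<le> \<delta> / (2 * M^2) * M^2" using mult_right_mono[OF e2 zero_le_power2[of M]] by simp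
    also have "\<dots> = \<delta> / 2" using M by simp
    finally have "\<epsilon> * norm (x0 - z)^2 \<le> \<delta>/2" .
    moreover have "f x0 \<le> \<epsilon> * ((x0 - z) \<bullet> (x0 - z))"
    proof -
      have "u x0 \<ge> a - b * norm (x0 - z)" using bd xf by blast
      then show ?thesis unfolding f_def conef_def by simp
    qed
    ultimately show False using fx0 dpos by (simp add: power2_norm_eq_inner)
  qed
  then have x0V: "x0 \<in> V" using x0 oV by (simp add: frontier_def interior_open)
  then have x0z: "x0 \<noteq> z" using z by blast
  obtain e where e: "e > 0" "ball x0 e \<subseteq> V" using oV x0V open_contains_ball by blast
  have lm: "\<forall>y\<in>ball x0 e \<inter> U. u y - conef a (-b) (-\<epsilon>) z y \<ge> u x0 - conef a (-b) (-\<epsilon>) z x0"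
  proof
    fix y assume "y \<in> ball x0 e \<inter> U"
    then have "f y \<le> f x0" using e x0 closure_subset by blast
    then show "u y - conef a (-b) (-\<epsilon>) z y \<ge> u x0 - conef a (-b) (-\<epsilon>) z x0" unfolding f_def by simp
  qed
  have x0U: "x0 \<in> U" using VU x0V by blast
  have "coneH (-b) (-\<epsilon>) z x0 (coneg (-b) (-\<epsilon>) z x0) \<bullet> coneg (-b) (-\<epsilon>) z x0 \<le> 0"
    apply (rule sup[rule_format, OF x0U cone_C2[OF x0z]])
    using e(1) lm by blast
  then have ge: "2 * \<epsilon> * (-b / norm (x0 - z) + 2 * \<epsilon>)^2 * norm (x0 - z) ^ 2 \<le> 0"
    using cone_val[OF x0z, of "-b" "-\<epsilon>"] by simp
  have nM: "norm (x0 - z) \<le> M" "norm (x0 - z) > 0" using M x0 x0z by auto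
  have "b / norm (x0 - z) \<ge> b / M" using nM b by (simp add: frac_le)
  moreover have "2 * \<epsilon> \<le> b / (2 * M)" using e1 by simp
  moreover have "b / (2*M) < b / M" using b M by (simp add: divide_strict_left_mono)
  ultimately have "-b / norm (x0 - z) + 2 * \<epsilon> < 0" by linarith
  then have "2 * \<epsilon> * (-b / norm (x0 - z) + 2 * \<epsilon>)^2 * norm (x0 - z) ^ 2 > 0"
    using epos nM by (simp add: mult_pos_pos)
  then show False using ge by linarith
qed

lemma ray_inside:
  fixes \<Omega>0 :: "'a::euclidean_space set"
  assumes "open \<Omega>0" "convex \<Omega>0" "x \<in> \<Omega>0" "x + r *\<^sub>R \<nu> \<in> closure \<Omega>0" "0 \<le> s" "s < r"
  shows "x + s *\<^sub>R \<nu> \<in> \<Omega>0"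
proof (cases "s = 0")
  case True then show ?thesis using assms by simp
next
  case False
  then have s0: "s > 0" using assms by simp
  show ?thesis
  proof (cases "\<nu> = 0")
    case True then show ?thesis using assms by simp
  next
    case False
    have "x + s *\<^sub>R \<nu> \<in> open_segment x (x + r *\<^sub>R \<nu>)"
      unfolding in_segment
    proof (intro conjI exI[of _ "s / r"])
      show "x \<noteq> x + r *\<^sub>R \<nu>" using False s0 assms(6) by simp
      show "0 < s / r" "s / r < 1" using s0 assms(6) by auto
      show "x + s *\<^sub>R \<nu> = (1 - s / r) *\<^sub>R x + (s / r) *\<^sub>R (x + r *\<^sub>R \<nu>)"
        using s0 assms(6) by (simp add: algebra_simps)
    qed
    then show ?thesis using in_interior_closure_convex_segment[of \<Omega>0 x "x + r *\<^sub>R \<nu>"] assms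
      by (auto simp: interior_open)
  qed
qed

lemma exit_radius_props:
  fixes \<Omega>0 :: "'a::euclidean_space set"
  assumes op: "open \<Omega>0" and bd: "bounded \<Omega>0" and cv: "convex \<Omega>0" and x: "x \<in> \<Omega>0" and nu: "norm \<nu> = 1"
  shows "0 < exit_radius \<Omega>0 x \<nu>" "x + exit_radius \<Omega>0 x \<nu> *\<^sub>R \<nu> \<in> frontier \<Omega>0"
    "x + exit_radius \<Omega>0 x \<nu> *\<^sub>R \<nu> \<notin> \<Omega>0"
    "\<And>s. 0 \<le> s \<Longrightarrow> s < exit_radius \<Omega>0 x \<nu> \<Longrightarrow> x + s *\<^sub>R \<nu> \<in> \<Omega>0"
proof -
  define T where "T = {s. 0 \<le> s \<and> x + s *\<^sub>R \<nu> \<in> \<Omega>0}"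
  obtain B where B: "\<forall>y\<in>\<Omega>0. norm y \<le> B" using bd bounded_pos by blast
  have Tb: "s \<le> B + norm x" if "s \<in> T" for s
  proof -
    have "norm (x + s *\<^sub>R \<nu>) \<le> B" using that B by (auto simp: T_def)
    moreover have "s = norm (s *\<^sub>R \<nu>)" using that nu by (auto simp: T_def)
    moreover have "norm (s *\<^sub>R \<nu>) \<le> norm (x + s *\<^sub>R \<nu>) + norm x"
      using norm_triangle_ineq4[of "x + s *\<^sub>R \<nu>" x] by simp
    ultimately show ?thesis by linarith
  qed
  have bdd: "bdd_above T" unfolding bdd_above_def using Tb by blast
  have T0: "0 \<in> T" using x by (simp add: T_def)
  define R where "R = Sup T"
  obtain e where e: "e > 0" "ball x e \<subseteq> \<Omega>0" using op x open_contains_ball by blast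
  have "e/2 \<in> T" using e nu by (auto simp: T_def dist_norm)
  then have R0: "R > 0" using cSup_upper[OF _ bdd, of "e/2"] e by (simp add: R_def)
  define p where "p = x + R *\<^sub>R \<nu>"
  have pnot: "p \<notin> \<Omega>0"
  proof
    assume "p \<in> \<Omega>0"
    then obtain e' where e': "e' > 0" "ball p e' \<subseteq> \<Omega>0" using op open_contains_ball by blast
    have "p - (x + (R + e'/2) *\<^sub>R \<nu>) = - ((e'/2) *\<^sub>R \<nu>)" by (simp add: p_def algebra_simps)
    then have "dist p (x + (R + e'/2) *\<^sub>R \<nu>) = e'/2" using nu e' by (simp add: dist_norm)
    then have "x + (R + e'/2) *\<^sub>R \<nu> \<in> ball p e'" using e' by simp
    then have "x + (R + e'/2) *\<^sub>R \<nu> \<in> \<Omega>0" using e'(2) by blast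
    then have "R + e'/2 \<in> T" unfolding T_def using R0 e'(1) by simp
    then have "R + e'/2 \<le> Sup T" by (rule cSup_upper[OF _ bdd])
    then show False using e' unfolding R_def by linarith
  qed
  have pcl: "p \<in> closure \<Omega>0"
    unfolding closure_approachable
  proof (intro allI impI)
    fix \<epsilon> :: real assume "\<epsilon> > 0"
    then have "R - \<epsilon> < Sup T" by (simp add: R_def)
    then obtain s where s: "s \<in> T" "R - \<epsilon> < s" using less_cSup_iff[OF _ bdd] T0 by blast
    have "s \<le> R" using cSup_upper[OF s(1) bdd] by (simp add: R_def)
    have eq: "x + s *\<^sub>R \<nu> - p = (s - R) *\<^sub>R \<nu>" by (simp add: p_def scaleR_diff_left)
    have "dist (x + s *\<^sub>R \<nu>) p = \<bar>R - s\<bar>"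
      unfolding dist_norm eq using nu by simp
    moreover have "x + s *\<^sub>R \<nu> \<in> \<Omega>0" using s(1) unfolding T_def by blast
    ultimately show "\<exists>y\<in>\<Omega>0. dist y p < \<epsilon>" using s(2) \<open>s \<le> R\<close> by (intro bexI[of _ "x + s *\<^sub>R \<nu>"]) auto
  qed
  have pfr: "p \<in> frontier \<Omega>0" using pcl pnot by (simp add: frontier_def interior_open op)
  have uniq: "r' = R" if "0 < r' \<and> x + r' *\<^sub>R \<nu> \<in> frontier \<Omega>0" for r'
  proof (rule ccontr)
    assume ne: "r' \<noteq> R"
    have fr: "x + r' *\<^sub>R \<nu> \<notin> \<Omega>0" "x + r' *\<^sub>R \<nu> \<in> closure \<Omega>0" using that
      by (auto simp: frontier_def interior_open op)
    show False
    proof (cases "r' < R")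
      case True
      have "x + r' *\<^sub>R \<nu> \<in> \<Omega>0"
        by (rule ray_inside[OF op cv x]) (use pcl True that in \<open>auto simp: p_def\<close>)
      then show False using fr by blast
    next
      case False
      then have "R < r'" using ne by simp
      have "x + R *\<^sub>R \<nu> \<in> \<Omega>0"
        by (rule ray_inside[OF op cv x fr(2)]) (use R0 \<open>R < r'\<close> in auto)
      then show False using pnot by (simp add: p_def)
    qed
  qed
  have ER: "exit_radius \<Omega>0 x \<nu> = R"
    unfolding exit_radius_def
  proof (rule the_equality)
    show "0 < R \<and> x + R *\<^sub>R \<nu> \<in> frontier \<Omega>0" using R0 pfr by (simp add: p_def)
    show "\<And>r. 0 < r \<and> x + r *\<^sub>R \<nu> \<in> frontier \<Omega>0 \<Longrightarrow> r = R" by (rule uniq)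
  qed
  show "0 < exit_radius \<Omega>0 x \<nu>" "x + exit_radius \<Omega>0 x \<nu> *\<^sub>R \<nu> \<in> frontier \<Omega>0"
    "x + exit_radius \<Omega>0 x \<nu> *\<^sub>R \<nu> \<notin> \<Omega>0" using ER R0 pfr pnot by (auto simp: p_def)
  fix s assume "0 \<le> s" "s < exit_radius \<Omega>0 x \<nu>"
  then show "x + s *\<^sub>R \<nu> \<in> \<Omega>0"
    by (intro ray_inside[OF op cv x, of R]) (use pcl ER in \<open>auto simp: p_def\<close>)
qed


lemma deriv_line:
  fixes u :: "'a::euclidean_space \<Rightarrow> real"
  assumes "(u has_derivative (\<lambda>h. D \<bullet> h)) (at x)"
  shows "((\<lambda>s. u (x + s *\<^sub>R w)) has_real_derivative (D \<bullet> w)) (at 0)"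
proof -
  have l: "((\<lambda>s. x + s *\<^sub>R w) has_derivative (\<lambda>s. s *\<^sub>R w)) (at 0)"
    by (rule derivative_eq_intros | simp)+
  have "(u has_derivative (\<lambda>h. D \<bullet> h)) (at (x + 0 *\<^sub>R w))" using assms by simp
  from has_derivative_compose[OF l this]
  have "((\<lambda>s. u (x + s *\<^sub>R w)) has_derivative (\<lambda>s. D \<bullet> (s *\<^sub>R w))) (at 0)" .
  moreover have "(\<lambda>s. D \<bullet> (s *\<^sub>R w)) = (*) (D \<bullet> w)" by (simp add: fun_eq_iff mult.commute)
  ultimately show ?thesis by (simp add: has_field_derivative_def)
qed


context
  fixes \<Omega>0 K :: "'a::euclidean_space set" and u :: "'a \<Rightarrow> real"
  assumes O0: "open \<Omega>0" "connected \<Omega>0" "bounded \<Omega>0" "convex \<Omega>0"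
    and K: "compact K" "convex K" "K \<noteq> {}" "K \<subseteq> \<Omega>0"
    and cont: "continuous_on (closure (\<Omega>0 - K)) u"
    and visc: "inf_harmonic_visc u (\<Omega>0 - K)"
    and u1: "\<And>y. y \<in> K \<Longrightarrow> u y = 1"
    and u0: "\<And>y. y \<notin> \<Omega>0 \<Longrightarrow> u y = 0"
begin

lemma oU: "open (\<Omega>0 - K)"
  using O0(1) K(1) by (simp add: compact_imp_closed open_Diff)

lemma subU: "\<forall>x0\<in>\<Omega>0 - K. \<forall>phi g H. C2_test phi x0 g H \<longrightarrow>
        (\<exists>e>0. \<forall>y\<in>ball x0 e \<inter> (\<Omega>0 - K). u y - phi y \<le> u x0 - phi x0) \<longrightarrow>
        H x0 (g x0) \<bullet> g x0 \<ge> 0"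
  using visc unfolding inf_harmonic_visc_def by blast

lemma supU: "\<forall>x0\<in>\<Omega>0 - K. \<forall>phi g H. C2_test phi x0 g H \<longrightarrow>
        (\<exists>e>0. \<forall>y\<in>ball x0 e \<inter> (\<Omega>0 - K). u y - phi y \<ge> u x0 - phi x0) \<longrightarrow>
        H x0 (g x0) \<bullet> g x0 \<le> 0"
  using visc unfolding inf_harmonic_visc_def by blast

lemma contV: assumes "V \<subseteq> \<Omega>0 - K" shows "continuous_on (closure V) u"
  by (rule continuous_on_subset[OF cont closure_mono[OF assms]])

lemma bU: "bounded (\<Omega>0 - K)"
  using O0(3) bounded_subset by blast

lemma frontier_U: "y \<in> frontier (\<Omega>0 - K) \<Longrightarrow> y \<notin> \<Omega>0 \<or> y \<in> K"
  using oU by (auto simp: frontier_def interior_open)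

lemma u_le1: "u y \<le> 1"
proof (cases "y \<in> \<Omega>0 - K")
  case False then show ?thesis using u0 u1 by (cases "y \<in> \<Omega>0") auto
next
  case True
  obtain k where k: "k \<in> K" using K(3) by blast
  show ?thesis
  proof (rule field_le_epsilon)
    fix e :: real assume e: "0 < e"
    define b where "b = e / (norm (y - k) + 1)"
    have b: "b > 0" using e by (simp add: b_def add_nonneg_pos)
    have "u y \<le> 1 + b * norm (y - k)"
    proof (rule cone_above[OF subU subset_refl oU bU _ b contV[OF subset_refl] _ True])
      show "k \<notin> \<Omega>0 - K" using k by blast
      show "\<forall>y\<in>frontier (\<Omega>0 - K). u y \<le> 1 + b * norm (y - k)"
      proof
        fix q assume "q \<in> frontier (\<Omega>0 - K)"
        then have "u q \<le> 1" using frontier_U u0 u1 by fastforce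
        then show "u q \<le> 1 + b * norm (q - k)" using b by (simp add: add_increasing2)
      qed
    qed
    moreover have "b * norm (y - k) \<le> e"
    proof -
      have "b * norm (y - k) \<le> b * (norm (y - k) + 1)" using b by simp
      also have "\<dots> = e"
      proof -
        have nz: "norm (y - k) + 1 \<noteq> 0" using norm_ge_zero[of "y - k"] by linarith
        show ?thesis unfolding b_def using nz by simp
      qed
      finally show ?thesis .
    qed
    ultimately show "u y \<le> 1 + e" by linarith
  qed
qed

lemma u_ge0: "u y \<ge> 0"
proof (cases "y \<in> \<Omega>0 - K")
  case False then show ?thesis using u0 u1 by (cases "y \<in> \<Omega>0") auto
next
  case True
  obtain k where k: "k \<in> K" using K(3) by blast
  show ?thesis
  proof (rule field_le_epsilon[of 0 "u y", simplified])
    fix e :: real assume e: "0 < e"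
    define b where "b = e / (norm (y - k) + 1)"
    have b: "b > 0" using e by (simp add: b_def add_nonneg_pos)
    have "u y \<ge> 0 - b * norm (y - k)"
    proof (rule cone_below[OF supU subset_refl oU bU _ b contV[OF subset_refl] _ True])
      show "k \<notin> \<Omega>0 - K" using k by blast
      show "\<forall>y\<in>frontier (\<Omega>0 - K). u y \<ge> 0 - b * norm (y - k)"
      proof
        fix q assume "q \<in> frontier (\<Omega>0 - K)"
        then have "u q \<ge> 0" using frontier_U u0 u1 by fastforce
        moreover have "b * norm (q - k) \<ge> 0" using b by simp
        ultimately show "u q \<ge> 0 - b * norm (q - k)" by linarith
      qed
    qed
    moreover have "b * norm (y - k) \<le> e"
    proof -
      have "b * norm (y - k) \<le> b * (norm (y - k) + 1)" using b by simp
      also have "\<dots> = e"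
      proof -
        have nz: "norm (y - k) + 1 \<noteq> 0" using norm_ge_zero[of "y - k"] by linarith
        show ?thesis unfolding b_def using nz by simp
      qed
      finally show ?thesis .
    qed
    ultimately show "0 \<le> u y + e" by linarith
  qed
qed


lemma lower_prop:
  assumes w: "w \<in> \<Omega>0" and rho: "\<rho> > 0" and bw: "ball w \<rho> \<subseteq> \<Omega>0" and y: "y \<in> ball w \<rho>"
  shows "u y \<ge> u w - (u w / \<rho>) * norm (y - w)"
proof (cases "u w = 0")
  case True then show ?thesis using u_ge0[of y] by simp
next
  case False
  then have uw: "u w > 0" using u_ge0[of w] by simp
  define V where "V = (ball w \<rho> \<inter> (\<Omega>0 - K)) - {w}"
  have b: "u w / \<rho> > 0" using uw rho by simp
  have VU: "V \<subseteq> \<Omega>0 - K" by (auto simp: V_def)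
  have "open (ball w \<rho> \<inter> (\<Omega>0 - K))" using oU by (simp add: open_Int)
  then have oV: "open V" unfolding V_def by (rule open_Diff) simp
  have bV: "bounded V" unfolding V_def by (rule bounded_subset[OF bounded_ball]) auto
  have zV: "w \<notin> V" by (simp add: V_def)
  have "closure V \<subseteq> closure (ball w \<rho>)" by (rule closure_mono) (auto simp: V_def)
  then have clV: "closure V \<subseteq> cball w \<rho>" using rho by simp
  have key: "u q \<ge> u w - (u w / \<rho>) * norm (q - w)" if q: "q \<in> cball w \<rho>" "q \<notin> V" for q
  proof -
    have nq: "norm (q - w) \<le> \<rho>" using q(1) by (simp add: dist_norm norm_minus_commute)
    have nn: "(u w / \<rho>) * norm (q - w) \<ge> 0" using b by (intro mult_nonneg_nonneg) auto
    consider "q = w" | "norm (q - w) = \<rho>" | "q \<noteq> w" "norm (q - w) < \<rho>" using nq by linarith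
    then show ?thesis
    proof cases
      case 1 then show ?thesis by simp
    next
      case 2 then show ?thesis using rho u_ge0[of q] by simp
    next
      case 3
      then have "q \<in> ball w \<rho>" by (simp add: dist_norm norm_minus_commute)
      then have "q \<in> \<Omega>0" using bw by blast
      then have "q \<in> K" using q(2) 3(1) \<open>q \<in> ball w \<rho>\<close> by (auto simp: V_def)
      then have "u q = 1" by (rule u1)
      then show ?thesis using u_le1[of w] nn by linarith
    qed
  qed
  show ?thesis
  proof (cases "y \<in> V")
    case True
    show ?thesis
    proof (rule cone_below[OF supU VU oV bV zV b contV[OF VU] _ True])
      show "\<forall>q\<in>frontier V. u w - u w / \<rho> * norm (q - w) \<le> u q"
      proof
        fix q assume "q \<in> frontier V"
        then have "q \<in> closure V" "q \<notin> V" using oV by (auto simp: frontier_def interior_open)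
        then show "u w - u w / \<rho> * norm (q - w) \<le> u q" using key clV by blast
      qed
    qed
  next
    case False
    then show ?thesis using key y by auto
  qed
qed

lemma lower_strict:
  assumes w: "w \<in> \<Omega>0" and rho: "\<rho> > 0" and bw: "ball w \<rho> \<subseteq> \<Omega>0" and y: "y \<in> ball w \<rho>"
    and uw: "u w > 0"
  shows "u y > 0"
proof -
  have "norm (y - w) < \<rho>" using y by (simp add: dist_norm norm_minus_commute)
  then have "(u w / \<rho>) * norm (y - w) < (u w / \<rho>) * \<rho>" using uw rho by (intro mult_strict_left_mono) auto
  also have "\<dots> = u w" using rho by simp
  finally show ?thesis using lower_prop[OF w rho bw y] by linarith
qed

lemma u_pos: assumes y: "y \<in> \<Omega>0" shows "u y > 0"
proof -
  define A where "A = {y\<in>\<Omega>0. u y > 0}"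
  define B where "B = {y\<in>\<Omega>0. u y \<le> 0}"
  have oA: "open A"
  proof (rule openI)
    fix y assume yA: "y \<in> A"
    then obtain \<rho> where r: "\<rho> > 0" "ball y \<rho> \<subseteq> \<Omega>0" using O0(1) open_contains_ball A_def by blast
    have "ball y \<rho> \<subseteq> A"
    proof
      fix q assume q: "q \<in> ball y \<rho>"
      have "u q > 0" by (rule lower_strict[of y \<rho> q]) (use yA r q in \<open>auto simp: A_def\<close>)
      then show "q \<in> A" using r q by (auto simp: A_def)
    qed
    then show "\<exists>e>0. ball y e \<subseteq> A" using r by blast
  qed
  have oB: "open B"
  proof (rule openI)
    fix y assume yB: "y \<in> B"
    then obtain \<rho>' where r: "\<rho>' > 0" "ball y \<rho>' \<subseteq> \<Omega>0" using O0(1) open_contains_ball B_def by blast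
    define \<rho> where "\<rho> = \<rho>'/2"
    have rp: "\<rho> > 0" using r by (simp add: \<rho>_def)
    have "ball y \<rho> \<subseteq> B"
    proof
      fix q assume q: "q \<in> ball y \<rho>"
      have qO: "q \<in> \<Omega>0" using q r by (auto simp: \<rho>_def)
      have "\<not> u q > 0"
      proof
        assume uq: "u q > 0"
        have sub: "ball q \<rho> \<subseteq> \<Omega>0"
        proof
          fix v assume "v \<in> ball q \<rho>"
          then have "dist y v < \<rho>'" using q dist_triangle[of y v q] by (simp add: \<rho>_def)
          then show "v \<in> \<Omega>0" using r by auto
        qed
        have "y \<in> ball q \<rho>" using q by (simp add: dist_commute)
        then have "u y > 0" using lower_strict[OF qO rp sub _ uq] by blast
        then show False using yB by (simp add: B_def)
      qed
      then show "q \<in> B" using qO by (simp add: B_def)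
    qed
    then show "\<exists>e>0. ball y e \<subseteq> B" using rp by blast
  qed
  have "A \<inter> \<Omega>0 = {} \<or> B \<inter> \<Omega>0 = {}"
    by (rule connectedD[OF O0(2) oA oB]) (auto simp: A_def B_def)
  moreover obtain k where "k \<in> K" using K(3) by blast
  then have "k \<in> A \<inter> \<Omega>0" using K(4) u1[of k] by (auto simp: A_def)
  ultimately have "B \<inter> \<Omega>0 = {}" by blast
  then show ?thesis using y by (auto simp: B_def)
qed


lemma upper_prop:
  assumes rho: "\<rho> > 0" and bw: "ball w \<rho> \<subseteq> \<Omega>0 - K" and y: "y \<in> ball w \<rho>"
  shows "u y \<le> u w + ((1 - u w) / \<rho>) * norm (y - w)"
proof (cases "u w = 1")
  case True then show ?thesis using u_le1[of y] by simp
next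
  case False
  then have uw: "u w < 1" using u_le1[of w] by simp
  define V where "V = ball w \<rho> - {w}"
  have b: "(1 - u w) / \<rho> > 0" using uw rho by simp
  have VU: "V \<subseteq> \<Omega>0 - K" using bw by (auto simp: V_def)
  have oV: "open V" unfolding V_def by (rule open_Diff) simp_all
  have bV: "bounded V" unfolding V_def by (rule bounded_subset[OF bounded_ball]) auto
  have zV: "w \<notin> V" by (simp add: V_def)
  have "closure V \<subseteq> closure (ball w \<rho>)" by (rule closure_mono) (auto simp: V_def)
  then have clV: "closure V \<subseteq> cball w \<rho>" using rho by simp
  have key: "u q \<le> u w + ((1 - u w) / \<rho>) * norm (q - w)" if q: "q \<in> cball w \<rho>" "q \<notin> V" for q
  proof -
    have nq: "norm (q - w) \<le> \<rho>" using q(1) by (simp add: dist_norm norm_minus_commute)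
    consider "q = w" | "norm (q - w) = \<rho>" | "q \<noteq> w" "norm (q - w) < \<rho>" using nq by linarith
    then show ?thesis
    proof cases
      case 1 then show ?thesis by simp
    next
      case 2 then show ?thesis using rho u_le1[of q] by simp
    next
      case 3
      then have "q \<in> V" by (simp add: V_def dist_norm norm_minus_commute)
      then show ?thesis using q(2) by blast
    qed
  qed
  show ?thesis
  proof (cases "y \<in> V")
    case True
    show ?thesis
    proof (rule cone_above[OF subU VU oV bV zV b contV[OF VU] _ True])
      show "\<forall>q\<in>frontier V. u q \<le> u w + (1 - u w) / \<rho> * norm (q - w)"
      proof
        fix q assume "q \<in> frontier V"
        then have "q \<in> closure V" "q \<notin> V" using oV by (auto simp: frontier_def interior_open)
        then show "u q \<le> u w + (1 - u w) / \<rho> * norm (q - w)" using key clV by blast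
      qed
    qed
  next
    case False
    then show ?thesis using key y by auto
  qed
qed

lemma upper_strict:
  assumes rho: "\<rho> > 0" and bw: "ball w \<rho> \<subseteq> \<Omega>0 - K" and y: "y \<in> ball w \<rho>"
    and uw: "u w < 1"
  shows "u y < 1"
proof -
  have "norm (y - w) < \<rho>" using y by (simp add: dist_norm norm_minus_commute)
  then have "((1 - u w) / \<rho>) * norm (y - w) < ((1 - u w) / \<rho>) * \<rho>" using uw rho by (intro mult_strict_left_mono) auto
  also have "\<dots> = 1 - u w" using rho by simp
  finally show ?thesis using upper_prop[OF rho bw y] by linarith
qed

lemma u_lt1: assumes x: "x \<in> \<Omega>0 - K" shows "u x < 1"
proof (rule ccontr)
  assume "\<not> u x < 1"
  then have ux: "u x \<ge> 1" by simp
  have xK: "x \<notin> K" using x by blast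
  obtain a \<beta> where ab: "a \<bullet> x < \<beta>" "\<forall>k\<in>K. a \<bullet> k > \<beta>"
    using separating_hyperplane_closed_point[OF K(2) compact_imp_closed[OF K(1)] xK] by blast
  have a0: "a \<noteq> 0"
  proof
    assume "a = 0"
    obtain k where "k \<in> K" using K(3) by blast
    then show False using ab \<open>a = 0\<close> by auto
  qed
  define d where "d = - (1 / norm a) *\<^sub>R a"
  have nd: "norm d = 1" using a0 by (simp add: d_def)
  have ad: "a \<bullet> d = - norm a" using a0 by (simp add: d_def power2_norm_eq_inner[symmetric] power2_eq_square)
  define R where "R = exit_radius \<Omega>0 x d"
  have xO: "x \<in> \<Omega>0" using x by blast
  note ER = exit_radius_props[OF O0(1) O0(3) O0(4) xO nd, folded R_def]
  define p where "p s = x + s *\<^sub>R d" for s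
  have pU: "p s \<in> \<Omega>0 - K" if "0 \<le> s" "s < R" for s
  proof -
    have "p s \<in> \<Omega>0" using ER(4) that by (simp add: p_def)
    moreover have "a \<bullet> p s < \<beta>"
    proof -
      have "a \<bullet> p s = a \<bullet> x - s * norm a" by (simp add: p_def inner_add_right ad)
      also have "\<dots> \<le> a \<bullet> x" using that by simp
      finally show ?thesis using ab(1) by linarith
    qed
    then have "p s \<notin> K" using ab(2) by force
    ultimately show ?thesis by blast
  qed
  have dp: "dist (p s) (p s') = \<bar>s - s'\<bar>" for s s'
  proof -
    have "p s - p s' = (s - s') *\<^sub>R d" by (simp add: p_def scaleR_diff_left)
    then show ?thesis using nd by (simp add: dist_norm)
  qed
  define A where "A = {s. p s \<in> \<Omega>0 - K \<and> u (p s) < 1}"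
  define B where "B = {s. p s \<in> \<Omega>0 - K \<and> u (p s) \<ge> 1}"
  have oA: "open A"
  proof (rule openI)
    fix s assume sA: "s \<in> A"
    then obtain \<rho> where r: "\<rho> > 0" "ball (p s) \<rho> \<subseteq> \<Omega>0 - K" using oU open_contains_ball A_def by blast
    have "ball s \<rho> \<subseteq> A"
    proof
      fix s' assume "s' \<in> ball s \<rho>"
      then have ps: "p s' \<in> ball (p s) \<rho>" using dp by (simp add: dist_real_def)
      then have "u (p s') < 1" using upper_strict[OF r(1) r(2) ps] sA by (simp add: A_def)
      then show "s' \<in> A" using ps r by (auto simp: A_def)
    qed
    then show "\<exists>e>0. ball s e \<subseteq> A" using r by blast
  qed
  have oB: "open B"
  proof (rule openI)
    fix s assume sB: "s \<in> B"
    then obtain \<rho>' where r: "\<rho>' > 0" "ball (p s) \<rho>' \<subseteq> \<Omega>0 - K" using oU open_contains_ball B_def by blast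
    define \<rho> where "\<rho> = \<rho>'/2"
    have rp: "\<rho> > 0" using r by (simp add: \<rho>_def)
    have "ball s \<rho> \<subseteq> B"
    proof
      fix s' assume "s' \<in> ball s \<rho>"
      then have ps: "p s' \<in> ball (p s) \<rho>" using dp by (simp add: dist_real_def)
      then have "p s' \<in> ball (p s) \<rho>'" using r by (simp add: \<rho>_def)
      then have qU: "p s' \<in> \<Omega>0 - K" using r(2) by blast
      have "\<not> u (p s') < 1"
      proof
        assume uq: "u (p s') < 1"
        have sub: "ball (p s') \<rho> \<subseteq> \<Omega>0 - K"
        proof
          fix v assume "v \<in> ball (p s') \<rho>"
          then have "dist (p s) v < \<rho>'" using ps dist_triangle[of "p s" v "p s'"] by (simp add: \<rho>_def)
          then show "v \<in> \<Omega>0 - K" using r by auto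
        qed
        have "p s \<in> ball (p s') \<rho>" using ps by (simp add: dist_commute)
        then have "u (p s) < 1" using upper_strict[OF rp sub _ uq] by blast
        then show False using sB by (simp add: B_def)
      qed
      then show "s' \<in> B" using qU by (simp add: B_def)
    qed
    then show "\<exists>e>0. ball s e \<subseteq> B" using rp by blast
  qed
  have cov: "{0..<R} \<subseteq> A \<union> B" using pU by (auto simp: A_def B_def)
  have "A \<inter> {0..<R} = {} \<or> B \<inter> {0..<R} = {}"
    by (rule connectedD[OF connected_Ico oA oB]) (use cov in \<open>auto simp: A_def B_def\<close>)
  moreover have "0 \<in> B \<inter> {0..<R}" using ux x ER(1) by (simp add: B_def p_def)
  ultimately have noA: "A \<inter> {0..<R} = {}" by blast
  have one: "u (p s) = 1" if "s \<in> {0..<R}" for s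
  proof -
    have "s \<notin> A" using noA that by blast
    then show ?thesis using pU[of s] that u_le1[of "p s"] by (simp add: A_def)
  qed
  have pc: "continuous_on {0..R} p" unfolding p_def by (intro continuous_intros)
  have clI: "closure {0..<R} = {0..R}" using ER(1) by simp
  have "p ` {0..R} \<subseteq> closure (\<Omega>0 - K)"
  proof -
    have "p ` closure {0..<R} \<subseteq> closure (\<Omega>0 - K)"
    proof (rule image_closure_subset)
      show "continuous_on (closure {0..<R}) p" using pc clI by simp
      show "closed (closure (\<Omega>0 - K))" by simp
      show "p ` {0..<R} \<subseteq> closure (\<Omega>0 - K)" using pU closure_subset by fastforce
    qed
    then show ?thesis using clI by simp
  qed
  then have fc: "continuous_on {0..R} (\<lambda>s. u (p s))"
    by (rule continuous_on_compose2[OF cont pc])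
  have "u (p R) = 1"
    by (rule continuous_constant_on_closure[of "{0..<R}" "\<lambda>s. u (p s)"]) (use fc clI one ER(1) in auto)
  moreover have "u (p R) = 0" using ER(3) u0 by (simp add: p_def)
  ultimately show False by simp
qed


lemma cone_key:
  assumes x: "x \<in> \<Omega>0 - K" and nu: "norm \<nu> = 1"
    and N: "\<forall>y\<in>{y\<in>\<Omega>0. u y > u x}. \<nu> \<bullet> (y - x) \<le> 0" and r: "r > 0"
    and y: "y \<in> cball (x + r *\<^sub>R \<nu>) r"
  shows "u y \<le> u (x + r *\<^sub>R \<nu>) + ((u x - u (x + r *\<^sub>R \<nu>)) / r) * norm (y - (x + r *\<^sub>R \<nu>))"
proof -
  define p where "p = x + r *\<^sub>R \<nu>"
  define t where "t = u x"
  have t0: "t > 0" using u_pos x by (simp add: t_def)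
  have t1: "t < 1" using u_lt1 x by (simp add: t_def)
  have nn: "\<nu> \<bullet> \<nu> = 1" using nu by (simp add: power2_norm_eq_inner[symmetric])
  have le_t: "u q \<le> t" if q: "q \<in> cball p r" for q
  proof (cases "q \<in> \<Omega>0")
    case False then show ?thesis using u0 t0 by simp
  next
    case True
    show ?thesis
    proof (rule ccontr)
      assume "\<not> u q \<le> t"
      then have "\<nu> \<bullet> (q - x) \<le> 0" using N True by (simp add: t_def)
      moreover have "q - x = (q - p) + r *\<^sub>R \<nu>" by (simp add: p_def)
      ultimately have i1: "\<nu> \<bullet> (q - p) + r \<le> 0" using nn by (simp add: inner_add_right)
      have nq: "norm (q - p) \<le> r" using q by (simp add: dist_norm norm_minus_commute)
      have qq: "(q - p) \<bullet> (q - p) \<le> r * r"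
      proof -
        have "(q - p) \<bullet> (q - p) = norm (q - p) * norm (q - p)" by (simp add: power2_norm_eq_inner[symmetric] power2_eq_square)
        also have "\<dots> \<le> r * r" using nq r by (intro mult_mono) auto
        finally show ?thesis .
      qed
      have "(q - x) \<bullet> (q - x) = (q - p) \<bullet> (q - p) + 2 * r * (\<nu> \<bullet> (q - p)) + r * r * (\<nu> \<bullet> \<nu>)"
        unfolding \<open>q - x = (q - p) + r *\<^sub>R \<nu>\<close> by (simp add: inner_add_left inner_add_right inner_commute algebra_simps)
      also have "\<dots> \<le> r * r + 2 * r * (- r) + r * r"
      proof -
        have "2 * r * (\<nu> \<bullet> (q - p)) \<le> 2 * r * (- r)" using i1 r by (intro mult_left_mono) auto
        moreover have "r * r * (\<nu> \<bullet> \<nu>) = r * r" using nn by simp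
        ultimately show ?thesis using qq by linarith
      qed
      finally have "(q - x) \<bullet> (q - x) \<le> 0" by simp
      then have "(q - x) \<bullet> (q - x) = 0" using inner_ge_zero[of "q - x"] by linarith
      then have "q = x" by simp
      then show False using \<open>\<not> u q \<le> t\<close> by (simp add: t_def)
    qed
  qed
  have pc: "p \<in> cball p r" using r by simp
  define m where "m = (t - u p) / r"
  have m0: "m \<ge> 0" using le_t[OF pc] r by (simp add: m_def)
  have yc: "y \<in> cball p r" using y by (simp add: p_def)
  have goal: "u y \<le> u p + m * norm (y - p)"
  proof (cases "m = 0")
    case True
    then have "t = u p" using r by (simp add: m_def)
    then show ?thesis using le_t[OF yc] True by simp
  next
    case False
    then have mp: "m > 0" using m0 by simp
    define V where "V = (ball p r \<inter> (\<Omega>0 - K)) - {p}"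
    have VU: "V \<subseteq> \<Omega>0 - K" by (auto simp: V_def)
    have "open (ball p r \<inter> (\<Omega>0 - K))" using oU by (simp add: open_Int)
    then have oV: "open V" unfolding V_def by (rule open_Diff) simp
    have bV: "bounded V" unfolding V_def by (rule bounded_subset[OF bounded_ball]) auto
    have zV: "p \<notin> V" by (simp add: V_def)
    have "closure V \<subseteq> closure (ball p r)" by (rule closure_mono) (auto simp: V_def)
    then have clV: "closure V \<subseteq> cball p r" using r by simp
    have key: "u q \<le> u p + m * norm (q - p)" if q: "q \<in> cball p r" "q \<notin> V" for q
    proof -
      have nq: "norm (q - p) \<le> r" using q(1) by (simp add: dist_norm norm_minus_commute)
      have mn: "m * norm (q - p) \<ge> 0" using m0 by simp
      consider "q = p" | "norm (q - p) = r" | "q \<noteq> p" "norm (q - p) < r" using nq by linarith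
      then show ?thesis
      proof cases
        case 1 then show ?thesis by simp
      next
        case 2
        then have "u p + m * norm (q - p) = t" using r by (simp add: m_def)
        then show ?thesis using le_t[OF q(1)] by simp
      next
        case 3
        then have qb: "q \<in> ball p r" by (simp add: dist_norm norm_minus_commute)
        then have "q \<notin> \<Omega>0 - K" using q(2) 3(1) by (auto simp: V_def)
        then consider "q \<notin> \<Omega>0" | "q \<in> K" by blast
        then show ?thesis
        proof cases
          case 1 then show ?thesis using u0 u_ge0[of p] mn by simp
        next
          case 2 then have "u q = 1" by (rule u1)
          then show ?thesis using le_t[OF q(1)] t1 by simp
        qed
      qed
    qed
    show ?thesis
    proof (cases "y \<in> V")
      case True
      show ?thesis
      proof (rule cone_above[OF subU VU oV bV zV mp contV[OF VU] _ True])
        show "\<forall>q\<in>frontier V. u q \<le> u p + m * norm (q - p)"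
        proof
          fix q assume "q \<in> frontier V"
          then have "q \<in> closure V" "q \<notin> V" using oV by (auto simp: frontier_def interior_open)
          then show "u q \<le> u p + m * norm (q - p)" using key clV by blast
        qed
      qed
    next
      case False
      then show ?thesis using key yc by auto
    qed
  qed
  then show ?thesis by (simp add: p_def m_def t_def)
qed


lemma main_result:
  assumes diff: "\<And>y. y \<in> \<Omega>0 - K \<Longrightarrow> u differentiable (at y)"
    and lvl: "\<And>t. convex {y\<in>\<Omega>0. u y > t}"
    and x: "x \<in> \<Omega>0 - K"
  shows "(\<forall>\<nu>\<in>normal_set u \<Omega>0 x. \<forall>r. 0 < r \<and> r \<le> exit_radius \<Omega>0 x \<nu> \<longrightarrow>
            - (grad u x \<bullet> \<nu>) \<ge> (u x - u (x + r *\<^sub>R \<nu>)) / r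
            \<and> (u x - u (x + r *\<^sub>R \<nu>)) / r > 0)
       \<and> normal_set u \<Omega>0 x = {- (1 / norm (grad u x)) *\<^sub>R grad u x}
       \<and> (\<forall>r. 0 < r \<and> r \<le> exit_radius \<Omega>0 x (- (1 / norm (grad u x)) *\<^sub>R grad u x) \<longrightarrow>
            norm (grad u x) \<ge> (u x - u (x + r *\<^sub>R (- (1 / norm (grad u x)) *\<^sub>R grad u x))) / r)
       \<and> norm (grad u x) \<ge> u x / exit_radius \<Omega>0 x (- (1 / norm (grad u x)) *\<^sub>R grad u x)"
proof -
  define t where "t = u x"
  have t0: "t > 0" using u_pos x by (simp add: t_def)
  have t1: "t < 1" using u_lt1 x by (simp add: t_def)
  have xO: "x \<in> \<Omega>0" using x by blast
  obtain D' where D': "(u has_derivative D') (at x)" using diff[OF x] by (auto simp: differentiable_def)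
  define D where "D = (\<Sum>b\<in>Basis. D' b *\<^sub>R b)"
  have "D' = (\<lambda>h. D \<bullet> h)"
    unfolding D_def by (rule ext, rule linear_inner_rep[OF has_derivative_linear[OF D']])
  with D' have Dd: "(u has_derivative (\<lambda>h. D \<bullet> h)) (at x)" by simp
  have gD: "grad u x = D"
    unfolding grad_def
  proof (rule the_equality)
    show "(u has_derivative (\<bullet>) D) (at x)" using Dd by simp
    fix E assume "(u has_derivative (\<bullet>) E) (at x)"
    then have "(\<lambda>h. E \<bullet> h) = (\<lambda>h. D \<bullet> h)" using has_derivative_unique Dd by blast
    then have "E \<bullet> (E - D) = D \<bullet> (E - D)" by metis
    then have "(E - D) \<bullet> (E - D) = 0" by (simp add: inner_diff_left)
    then show "E = D" by simp
  qed
  define L where "L = {y\<in>\<Omega>0. u y > t}"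
  have claim1: "- (D \<bullet> \<nu>) \<ge> (t - u (x + r *\<^sub>R \<nu>)) / r \<and> (t - u (x + r *\<^sub>R \<nu>)) / r > 0"
    if nuN: "\<nu> \<in> normal_set u \<Omega>0 x" and r: "0 < r" "r \<le> exit_radius \<Omega>0 x \<nu>" for \<nu> r
  proof -
    have nu: "norm \<nu> = 1" and N: "\<forall>y\<in>{y\<in>\<Omega>0. u y > u x}. \<nu> \<bullet> (y - x) \<le> 0"
      using nuN by (auto simp: normal_set_def)
    define R where "R = exit_radius \<Omega>0 x \<nu>"
    note ER = exit_radius_props[OF O0(1) O0(3) O0(4) xO nu, folded R_def]
    have rR: "r \<le> R" using r by (simp add: R_def)
    define y where "y = x + r *\<^sub>R \<nu>"
    define pR where "pR = x + R *\<^sub>R \<nu>"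
    have upR: "u pR = 0" using ER(3) u0 by (simp add: pR_def)
    have ypR: "y - pR = (r - R) *\<^sub>R \<nu>" by (simp add: y_def pR_def scaleR_diff_left)
    have nypR: "norm (y - pR) = R - r" unfolding ypR using nu rR by simp
    have yc: "y \<in> cball pR R" using nypR rR r by (simp add: dist_norm norm_minus_commute)
    have "u y \<le> u pR + ((u x - u pR) / R) * norm (y - pR)"
      using cone_key[OF x nu N ER(1) yc[unfolded pR_def]] by (simp add: pR_def)
    also have "\<dots> = t - t * r / R" using ER(1) by (simp add: upR nypR t_def field_simps)
    also have "\<dots> < t" using t0 r ER(1) by simp
    finally have uy: "u y < t" .
    have pos: "(t - u y) / r > 0" using uy r by simp
    define m where "m = (t - u y) / r"
    have near: "u (x + e *\<^sub>R \<nu>) \<le> t - m * e" if e: "0 < e" "e \<le> r" for e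
    proof -
      have d: "x + e *\<^sub>R \<nu> - y = (e - r) *\<^sub>R \<nu>" by (simp add: y_def scaleR_diff_left)
      have nd: "norm (x + e *\<^sub>R \<nu> - y) = r - e" unfolding d using nu e by simp
      have c: "x + e *\<^sub>R \<nu> \<in> cball y r" using nd e by (simp add: dist_norm norm_minus_commute)
      have "u (x + e *\<^sub>R \<nu>) \<le> u y + ((u x - u y) / r) * norm (x + e *\<^sub>R \<nu> - y)"
        using cone_key[OF x nu N r(1) c[unfolded y_def]] by (simp add: y_def)
      also have "\<dots> = t - m * e" using r by (simp add: nd m_def t_def field_simps)
      finally show ?thesis .
    qed
    have "D \<bullet> \<nu> \<le> - m"
    proof (rule ccontr)
      assume "\<not> D \<bullet> \<nu> \<le> - m"
      then have pp: "D \<bullet> \<nu> + m > 0" by simp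
      have "((\<lambda>s. u (x + s *\<^sub>R \<nu>) + m * s) has_real_derivative (D \<bullet> \<nu> + m)) (at 0)"
        by (rule DERIV_add[OF deriv_line[OF Dd]]) (rule DERIV_cmult_Id)
      from DERIV_pos_inc_right[OF this pp] obtain d where d: "d > 0"
        "\<And>h. h > 0 \<Longrightarrow> h < d \<Longrightarrow> u (x + 0 *\<^sub>R \<nu>) + m * 0 < u (x + (0 + h) *\<^sub>R \<nu>) + m * (0 + h)" by blast
      define e where "e = min (d/2) r"
      have e: "0 < e" "e \<le> r" "e < d" using d r by (auto simp: e_def)
      have "t < u (x + e *\<^sub>R \<nu>) + m * e" using d(2)[OF e(1) e(3)] by (simp add: t_def)
      then show False using near[OF e(1) e(2)] by simp
    qed
    then have "- (D \<bullet> \<nu>) \<ge> m" by simp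
    then show ?thesis using pos by (simp add: m_def y_def)
  qed
  obtain \<nu>0 where nu0: "\<nu>0 \<in> normal_set u \<Omega>0 x"
  proof -
    have cS: "convex ((\<lambda>y. y - x) ` L)" unfolding L_def by (rule convex_translation_subtract[OF lvl])
    have "0 \<notin> (\<lambda>y. y - x) ` L" by (auto simp: L_def t_def)
    from separating_hyperplane_set_0[OF cS this] obtain a where a: "a \<noteq> 0" "\<forall>z\<in>(\<lambda>y. y - x) ` L. 0 \<le> a \<bullet> z" by blast
    define \<nu> where "\<nu> = - (1 / norm a) *\<^sub>R a"
    have "\<nu> \<in> normal_set u \<Omega>0 x"
      unfolding normal_set_def
    proof (intro CollectI conjI ballI)
      show "norm \<nu> = 1" using a(1) by (simp add: \<nu>_def)
      fix y assume "y \<in> {y \<in> \<Omega>0. u x < u y}"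
      then have "y \<in> L" by (simp add: L_def t_def)
      then have "0 \<le> a \<bullet> (y - x)" using a(2) by blast
      then show "\<nu> \<bullet> (y - x) \<le> 0" by (simp add: \<nu>_def)
    qed
    then show ?thesis by (rule that)
  qed
  have Dne: "D \<noteq> 0"
  proof
    assume "D = 0"
    have nu: "norm \<nu>0 = 1" using nu0 by (simp add: normal_set_def)
    have "0 < exit_radius \<Omega>0 x \<nu>0" using exit_radius_props(1)[OF O0(1) O0(3) O0(4) xO nu] .
    from claim1[OF nu0 this order_refl] \<open>D = 0\<close> show False by auto
  qed
  define e0 where "e0 = (1 / norm D) *\<^sub>R D"
  have ne0: "norm e0 = 1" using Dne by (simp add: e0_def)
  have De0: "D \<bullet> e0 = norm D" using Dne by (simp add: e0_def power2_norm_eq_inner[symmetric] power2_eq_square)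
  have Deq: "D = norm D *\<^sub>R e0" using Dne by (simp add: e0_def)
  have uniq: "\<nu> = - e0" if nuN: "\<nu> \<in> normal_set u \<Omega>0 x" for \<nu>
  proof -
    have nu: "norm \<nu> = 1" and N: "\<forall>y\<in>{y\<in>\<Omega>0. u y > u x}. \<nu> \<bullet> (y - x) \<le> 0"
      using nuN by (auto simp: normal_set_def)
    have F: "\<nu> \<bullet> w \<le> 0" if Dw: "D \<bullet> w > 0" for w
    proof -
      from DERIV_pos_inc_right[OF deriv_line[OF Dd] Dw] obtain d where d: "d > 0"
        "\<And>h. h > 0 \<Longrightarrow> h < d \<Longrightarrow> u (x + 0 *\<^sub>R w) < u (x + (0 + h) *\<^sub>R w)" by blast
      obtain e where e: "e > 0" "ball x e \<subseteq> \<Omega>0" using O0(1) xO open_contains_ball by blast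
      define h where "h = min (d/2) (e / (2 * (norm w + 1)))"
      have "e / (2 * (norm w + 1)) > 0" using e(1) by (intro divide_pos_pos) (auto simp: add_nonneg_pos)
      then have h: "h > 0" "h < d" using d by (auto simp: h_def)
      have "norm (h *\<^sub>R w) < e"
      proof -
        have "norm (h *\<^sub>R w) = h * norm w" using h by simp
        also have "\<dots> \<le> (e / (2 * (norm w + 1))) * norm w" by (intro mult_right_mono) (auto simp: h_def)
        also have "\<dots> < e"
        proof -
          have np: "norm w + 1 > 0" by (simp add: add_nonneg_pos)
          have "(e / (2 * (norm w + 1))) * norm w = e * (norm w / (2 * (norm w + 1)))" by simp
          also have "norm w / (2 * (norm w + 1)) < 1" using np by (simp add: divide_less_eq)
          then have "e * (norm w / (2 * (norm w + 1))) < e * 1" using e(1) by (intro mult_strict_left_mono)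
          finally show ?thesis by simp
        qed
        finally show ?thesis .
      qed
      then have "x + h *\<^sub>R w \<in> ball x e" by (simp add: dist_norm)
      then have inO: "x + h *\<^sub>R w \<in> \<Omega>0" using e(2) by blast
      have "u x < u (x + h *\<^sub>R w)" using d(2)[OF h] by simp
      then have "\<nu> \<bullet> (x + h *\<^sub>R w - x) \<le> 0" using N inO by blast
      then have "h * (\<nu> \<bullet> w) \<le> 0" by simp
      then show ?thesis using h(1) by (simp add: mult_le_0_iff)
    qed
    define \<gamma> where "\<gamma> = \<nu> \<bullet> e0"
    have g0: "\<gamma> \<le> 0" using F[of e0] De0 Dne by (simp add: \<gamma>_def)
    have gm1: "\<gamma> \<ge> -1"
    proof -
      have "\<bar>\<gamma>\<bar> \<le> norm \<nu> * norm e0" unfolding \<gamma>_def by (rule Cauchy_Schwarz_ineq2)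
      then show ?thesis using nu ne0 by simp
    qed
    have Dnu: "D \<bullet> \<nu> = norm D * \<gamma>"
      by (subst Deq) (simp add: \<gamma>_def inner_commute)
    have geq: "\<gamma> = -1"
    proof (rule ccontr)
      assume "\<gamma> \<noteq> -1"
      then have gg: "\<gamma> > -1" using gm1 by simp
      define \<eta> where "\<eta> = (1 - \<gamma>^2) / 2"
      define s where "s = - \<gamma> + \<eta>"
      have g2: "\<gamma>^2 < 1" using gg g0 by (simp add: abs_square_less_1)
      then have eta: "\<eta> > 0" by (simp add: \<eta>_def)
      have "1 + s * \<gamma> = (1 - \<gamma>^2) * (1 + \<gamma> / 2)" by (simp add: s_def \<eta>_def power2_eq_square algebra_simps)
      also have "\<dots> > 0" using g2 gg by (intro mult_pos_pos) auto
      finally have p1: "1 + s * \<gamma> > 0" .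
      have "D \<bullet> (e0 + s *\<^sub>R \<nu>) = norm D * (1 + s * \<gamma>)"
        by (simp add: inner_add_right De0 Dnu algebra_simps)
      also have "\<dots> > 0" using p1 Dne by simp
      finally have "\<nu> \<bullet> (e0 + s *\<^sub>R \<nu>) \<le> 0" by (rule F)
      moreover have "\<nu> \<bullet> (e0 + s *\<^sub>R \<nu>) = \<gamma> + s"
      proof -
        have "\<nu> \<bullet> \<nu> = 1" using nu by (simp add: power2_norm_eq_inner[symmetric])
        then show ?thesis by (simp add: inner_add_right \<gamma>_def)
      qed
      moreover have "\<gamma> + s = \<eta>" by (simp add: s_def)
      ultimately show False using eta by simp
    qed
    have "(\<nu> + e0) \<bullet> (\<nu> + e0) = 0"
    proof -
      have "\<nu> \<bullet> \<nu> = 1" using nu by (simp add: power2_norm_eq_inner[symmetric])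
      moreover have "e0 \<bullet> e0 = 1" using ne0 by (simp add: power2_norm_eq_inner[symmetric])
      ultimately show ?thesis using geq by (simp add: inner_add_left inner_add_right inner_commute \<gamma>_def)
    qed
    then have "\<nu> + e0 = 0" by simp
    then show ?thesis by (simp add: eq_neg_iff_add_eq_0)
  qed
  have nuxe: "- (1 / norm (grad u x)) *\<^sub>R grad u x = - e0" by (simp add: gD e0_def)
  have NS: "normal_set u \<Omega>0 x = {- e0}"
    using uniq nu0 by blast
  have nuxN: "- e0 \<in> normal_set u \<Omega>0 x" using NS by simp
  have Dnux: "- (D \<bullet> (- e0)) = norm D" using De0 by simp
  have claim3: "norm D \<ge> (t - u (x + r *\<^sub>R (- e0))) / r" if "0 < r" "r \<le> exit_radius \<Omega>0 x (- e0)" for r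
    using claim1[OF nuxN that] Dnux by simp
  have ne0': "norm (- e0) = 1" using ne0 by simp
  note ER0 = exit_radius_props[OF O0(1) O0(3) O0(4) xO ne0']
  have "norm D \<ge> (t - u (x + exit_radius \<Omega>0 x (- e0) *\<^sub>R (- e0))) / exit_radius \<Omega>0 x (- e0)"
    using claim3[OF ER0(1) order_refl] .
  then have claim4: "norm D \<ge> t / exit_radius \<Omega>0 x (- e0)" using ER0(3) u0 by simp
  show ?thesis
    unfolding nuxe
    using claim1 NS claim3 claim4 by (simp add: gD t_def)
qed

end


theorem lemma4p1:
  fixes \<Omega>0 K :: "'a::euclidean_space set" and u :: "'a \<Rightarrow> real"
  assumes dim: "DIM('a) \<ge> 2"
    and O0: "open \<Omega>0" "connected \<Omega>0" "bounded \<Omega>0" "convex \<Omega>0"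
    and K: "compact K" "convex K" "K \<noteq> {}" "K \<subseteq> \<Omega>0"
    and cont: "continuous_on (closure (\<Omega>0 - K)) u"
    and visc: "inf_harmonic_visc u (\<Omega>0 - K)"
    and u1: "\<And>y. y \<in> K \<Longrightarrow> u y = 1"
    and u0: "\<And>y. y \<notin> \<Omega>0 \<Longrightarrow> u y = 0"
    and diff: "\<And>y. y \<in> \<Omega>0 - K \<Longrightarrow> u differentiable (at y)"
    and lvl: "\<And>t. convex {y\<in>\<Omega>0. u y > t}"
    and x: "x \<in> \<Omega>0 - K"
  shows "(\<forall>\<nu>\<in>normal_set u \<Omega>0 x. \<forall>r. 0 < r \<and> r \<le> exit_radius \<Omega>0 x \<nu> \<longrightarrow>
            - (grad u x \<bullet> \<nu>) \<ge> (u x - u (x + r *\<^sub>R \<nu>)) / r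
            \<and> (u x - u (x + r *\<^sub>R \<nu>)) / r > 0)
       \<and> normal_set u \<Omega>0 x = {- (1 / norm (grad u x)) *\<^sub>R grad u x}
       \<and> (\<forall>r. 0 < r \<and> r \<le> exit_radius \<Omega>0 x (- (1 / norm (grad u x)) *\<^sub>R grad u x) \<longrightarrow>
            norm (grad u x) \<ge> (u x - u (x + r *\<^sub>R (- (1 / norm (grad u x)) *\<^sub>R grad u x))) / r)
       \<and> norm (grad u x) \<ge> u x / exit_radius \<Omega>0 x (- (1 / norm (grad u x)) *\<^sub>R grad u x)"
    using main_result[OF O0 K cont visc u1 u0 diff lvl x] .

end
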